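(* Let $\mathcal E_\infty(\mathbb N)=\{f\in l^\infty(\mathbb N):\mathrm{AE}(f)=+\infty\}$. Then $\mathcal E_\infty(\mathbb N)$ is dense in $l^\infty(\mathbb N)$ in the norm topology.
   Context: $\mathbb N=\{0,1,2,\ldots\}$ and $l^\infty(\mathbb N)$ is the C*-algebra of bounded complex-valued functions on $\mathbb N$ with the sup norm. Let $\sigma_A:l^\infty(\mathbb N)\to l^\infty(\mathbb N)$ be $(\sigma_Af)(n)=f(n+1)$. An anqie is a unital C*-subalgebra $\mathcal A\subseteq l^\infty(\mathbb N)$ with $\sigma_A(\mathcal A)\subseteq\mathcal A$. For $\mathcal F\subseteq l^\infty(\mathbb N)$, $\mathcal A_{\mathcal F}$ denotes the smallest anqie containing $\mathcal F$. For an anqie $\mathcal A$ with maximal ideal space $X$ (weak* topology), the map $A:X\to X$, $(A\rho)(f)=\rho(\sigma_Af)$, is continuous; the anqie entropy $\mathrm{AE}(\mathcal A)\in[0,\infty]$ is the topological entropy $h(A)$, and $\mathrm{AE}(f)=\mathrm{AE}(\mathcal A_{\{f\}})$. *)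

theory Defs
  imports "HOL-Analysis.Analysis" "HOL-Library.Extended_Real"
begin

definition linf :: "(nat \<Rightarrow> complex) set" where
  "linf = {f. bounded (range f)}"

definition linf_norm :: "(nat \<Rightarrow> complex) \<Rightarrow> real" where
  "linf_norm f = (SUP n. cmod (f n))"

definition shiftA :: "(nat \<Rightarrow> complex) \<Rightarrow> (nat \<Rightarrow> complex)" where
  "shiftA f = (\<lambda>n. f (Suc n))"

definition unital_cstar_subalg :: "(nat \<Rightarrow> complex) set \<Rightarrow> bool" where
  "unital_cstar_subalg A \<longleftrightarrow>
     A \<subseteq> linf \<and>
     (\<lambda>_. 1) \<in> A \<and>
     (\<forall>f\<in>A. \<forall>g\<in>A. (\<lambda>n. f n + g n) \<in> A) \<and>
     (\<forall>c. \<forall>f\<in>A. (\<lambda>n. c * f n) \<in> A) \<and>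
     (\<forall>f\<in>A. \<forall>g\<in>A. (\<lambda>n. f n * g n) \<in> A) \<and>
     (\<forall>f\<in>A. (\<lambda>n. cnj (f n)) \<in> A) \<and>
     (\<forall>g\<in>linf. (\<forall>e>0. \<exists>f\<in>A. linf_norm (\<lambda>n. f n - g n) < e) \<longrightarrow> g \<in> A)"

definition anqie :: "(nat \<Rightarrow> complex) set \<Rightarrow> bool" where
  "anqie A \<longleftrightarrow> unital_cstar_subalg A \<and> shiftA ` A \<subseteq> A"

definition anqie_gen :: "(nat \<Rightarrow> complex) set \<Rightarrow> (nat \<Rightarrow> complex) set" where
  "anqie_gen F = \<Inter> {A. anqie A \<and> F \<subseteq> A}"

definition characters :: "(nat \<Rightarrow> complex) set \<Rightarrow> ((nat \<Rightarrow> complex) \<Rightarrow> complex) set" where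
  "characters A = {\<rho> \<in> extensional A.
      (\<forall>f\<in>A. \<forall>g\<in>A. \<rho> (\<lambda>n. f n + g n) = \<rho> f + \<rho> g) \<and>
      (\<forall>c. \<forall>f\<in>A. \<rho> (\<lambda>n. c * f n) = c * \<rho> f) \<and>
      (\<forall>f\<in>A. \<forall>g\<in>A. \<rho> (\<lambda>n. f n * g n) = \<rho> f * \<rho> g) \<and>
      \<rho> (\<lambda>_. 1) = 1}"

text \<open>Weak* topology: pointwise convergence on A, i.e. the subspace topology
of the product topology.\<close>
definition weak_star_top :: "(nat \<Rightarrow> complex) set \<Rightarrow> ((nat \<Rightarrow> complex) \<Rightarrow> complex) topology" where
  "weak_star_top A = subtopology (product_topology (\<lambda>_. euclidean) A) (characters A)"

definition anqie_map :: "(nat \<Rightarrow> complex) set \<Rightarrow> ((nat \<Rightarrow> complex) \<Rightarrow> complex) \<Rightarrow> ((nat \<Rightarrow> complex) \<Rightarrow> complex)" where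
  "anqie_map A \<rho> = restrict (\<lambda>f. \<rho> (shiftA f)) A"

definition open_covers :: "'a topology \<Rightarrow> 'a set set set" where
  "open_covers T = {U. (\<forall>S\<in>U. openin T S) \<and> \<Union>U = topspace T}"

definition cover_num :: "'a topology \<Rightarrow> 'a set set \<Rightarrow> nat" where
  "cover_num T U = Inf {card V | V. V \<subseteq> U \<and> finite V \<and> \<Union>V = topspace T}"

definition join_cover :: "'a topology \<Rightarrow> ('a \<Rightarrow> 'a) \<Rightarrow> 'a set set \<Rightarrow> nat \<Rightarrow> 'a set set" where
  "join_cover T g U n =
     {topspace T \<inter> (\<Inter>i<n. (g ^^ i) -` W i) | W. \<forall>i<n. W i \<in> U}"

definition cover_entropy :: "'a topology \<Rightarrow> ('a \<Rightarrow> 'a) \<Rightarrow> 'a set set \<Rightarrow> ereal" where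
  "cover_entropy T g U =
     limsup (\<lambda>n. ereal (ln (real (cover_num T (join_cover T g U n))) / real n))"

definition top_entropy :: "'a topology \<Rightarrow> ('a \<Rightarrow> 'a) \<Rightarrow> ereal" where
  "top_entropy T g = (SUP U \<in> open_covers T. cover_entropy T g U)"

definition AE_alg :: "(nat \<Rightarrow> complex) set \<Rightarrow> ereal" where
  "AE_alg A = top_entropy (weak_star_top A) (anqie_map A)"

definition AE_fun :: "(nat \<Rightarrow> complex) \<Rightarrow> ereal" where
  "AE_fun f = AE_alg (anqie_gen {f})"

definition E_infty :: "(nat \<Rightarrow> complex) set" where
  "E_infty = {f \<in> linf. AE_fun f = \<infinity>}"

end

theory Submission
  imports Defs
begin

lemma gen_closed:
  assumes "\<And>B. anqie B \<Longrightarrow> F \<subseteq> B \<Longrightarrow> h \<in> B"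
  shows "h \<in> anqie_gen F"
  using assms unfolding anqie_gen_def by blast

lemma gen_ops:
  shows "F \<subseteq> anqie_gen F"
    and "(\<lambda>_. 1) \<in> anqie_gen F"
    and "f \<in> anqie_gen F \<Longrightarrow> h \<in> anqie_gen F \<Longrightarrow> (\<lambda>n. f n + h n) \<in> anqie_gen F"
    and "f \<in> anqie_gen F \<Longrightarrow> (\<lambda>n. c * f n) \<in> anqie_gen F"
    and "f \<in> anqie_gen F \<Longrightarrow> h \<in> anqie_gen F \<Longrightarrow> (\<lambda>n. f n * h n) \<in> anqie_gen F"
    and "f \<in> anqie_gen F \<Longrightarrow> shiftA f \<in> anqie_gen F"
  unfolding anqie_gen_def anqie_def unital_cstar_subalg_def by blast+

definition ev :: "(nat \<Rightarrow> complex) set \<Rightarrow> nat \<Rightarrow> ((nat \<Rightarrow> complex) \<Rightarrow> complex)" where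
  "ev A m = restrict (\<lambda>h. h m) A"

lemma ev_char: "ev (anqie_gen F) m \<in> characters (anqie_gen F)"
  unfolding characters_def ev_def using gen_ops by auto

lemma map_char:
  assumes "\<rho> \<in> characters (anqie_gen F)"
  shows "anqie_map (anqie_gen F) \<rho> \<in> characters (anqie_gen F)"
proof -
  let ?A = "anqie_gen F"
  have sh: "\<And>f h. shiftA (\<lambda>n. f n + h n) = (\<lambda>n. shiftA f n + shiftA h n)"
     "\<And>f c. shiftA (\<lambda>n. c * f n) = (\<lambda>n. c * shiftA f n)"
     "\<And>f h. shiftA (\<lambda>n. f n * h n) = (\<lambda>n. shiftA f n * shiftA h n)"
     "shiftA (\<lambda>_. 1) = (\<lambda>_. 1)"
    by (auto simp: shiftA_def)
  show ?thesis using assms gen_ops(2-6)[where F=F]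
    unfolding characters_def anqie_map_def
    by (auto simp: sh)
qed

lemma map_iter_char:
  assumes "\<rho> \<in> characters (anqie_gen F)"
  shows "(anqie_map (anqie_gen F) ^^ i) \<rho> \<in> characters (anqie_gen F)"
  using assms by (induction i) (auto intro: map_char)

lemma map_ev: "anqie_map (anqie_gen F) (ev (anqie_gen F) m) = ev (anqie_gen F) (Suc m)"
  unfolding anqie_map_def ev_def using gen_ops(6)[where F=F]
  by (auto simp: shiftA_def restrict_def fun_eq_iff)

lemma map_iter_ev: "(anqie_map (anqie_gen F) ^^ i) (ev (anqie_gen F) m) = ev (anqie_gen F) (m + i)"
  by (induction i) (auto simp: map_ev)

lemma topspace_ws: "topspace (weak_star_top A) = characters A"
  unfolding weak_star_top_def topspace_subtopology topspace_product_topology_alt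
  by (auto simp: characters_def)

lemma cont_eval:
  assumes "g \<in> A" and "continuous_on UNIV \<phi>"
  shows "continuous_map (weak_star_top A) euclidean (\<lambda>\<rho>. \<phi> (\<rho> g))"
proof -
  have "continuous_map (product_topology (\<lambda>_. euclidean) A) euclidean (\<lambda>\<rho>. \<rho> g)"
    using continuous_map_product_projection[OF assms(1), of "\<lambda>_. euclidean"] by simp
  moreover have "continuous_map euclidean euclidean \<phi>" using assms(2) by simp
  ultimately have "continuous_map (product_topology (\<lambda>_. euclidean) A) euclidean (\<lambda>\<rho>. \<phi> (\<rho> g))"
    using continuous_map_compose[of _ euclidean "\<lambda>\<rho>. \<rho> g" euclidean \<phi>] by (simp add: o_def)
  then show ?thesis unfolding weak_star_top_def by (rule continuous_map_from_subtopology)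
qed


lemma int_close:
  fixes a b :: nat
  assumes "dist (real a) (real k) < 2/3" "dist (real b) (real k) < 2/3"
  shows "a = b"
proof -
  have "\<bar>real a - real k\<bar> < 2/3" "\<bar>real b - real k\<bar> < 2/3" using assms by (auto simp: dist_real_def)
  then have "a = k" "b = k" by linarith+
  then show ?thesis by simp
qed

lemma entropy_lower:
  fixes g :: "nat \<Rightarrow> complex" and \<phi> :: "complex \<Rightarrow> real" and L :: "nat \<Rightarrow> nat" and K N :: nat
  assumes cont: "continuous_on UNIV \<phi>"
    and rng: "\<And>z. 0 \<le> \<phi> z \<and> \<phi> z \<le> real N"
    and val: "\<And>n. \<phi> (g n) = real (L n)"
    and K: "K \<ge> 1"
    and words: "\<And>w. set w \<subseteq> {..<K} \<Longrightarrow> \<exists>m. \<forall>i<length w. L (m+i) = Suc (w!i)"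
  shows "ereal (ln K) \<le> AE_fun g"
proof -
  define A where "A = anqie_gen {g}"
  define T where "T = weak_star_top A"
  define G where "G = anqie_map A"
  define U where "U = (\<lambda>k::nat. {\<rho> \<in> characters A. \<phi> (\<rho> g) \<in> ball (real k) (2/3)}) ` {..N}"
  have gA: "g \<in> A" unfolding A_def using gen_ops(1) by blast
  have topT: "topspace T = characters A" unfolding T_def by (rule topspace_ws)
  have contm: "continuous_map T euclidean (\<lambda>\<rho>. \<phi> (\<rho> g))"
    unfolding T_def by (rule cont_eval[OF gA cont])
  have Uopen: "\<forall>S\<in>U. openin T S"
  proof
    fix S assume "S \<in> U"
    then obtain k where S: "S = {\<rho> \<in> characters A. \<phi> (\<rho> g) \<in> ball (real k) (2/3)}"
      unfolding U_def by blast
    show "openin T S" unfolding S topT[symmetric]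
      by (rule openin_continuous_map_preimage[OF contm]) simp
  qed
  have Ucov: "\<Union>U = topspace T"
  proof
    show "\<Union>U \<subseteq> topspace T" unfolding U_def topT by auto
    show "topspace T \<subseteq> \<Union>U"
    proof
      fix \<rho> assume r: "\<rho> \<in> topspace T"
      define x where "x = \<phi> (\<rho> g)"
      define k where "k = nat \<lfloor>x + 1/2\<rfloor>"
      have x: "0 \<le> x" "x \<le> real N" using rng unfolding x_def by auto
      have fl0: "0 \<le> \<lfloor>x + 1/2\<rfloor>" using x by simp
      have kk: "real k = of_int \<lfloor>x + 1/2\<rfloor>" unfolding k_def using fl0 by simp
      have f1: "of_int \<lfloor>x + 1/2\<rfloor> \<le> x + 1/2" by (rule of_int_floor_le)
      have f2: "x + 1/2 < of_int \<lfloor>x + 1/2\<rfloor> + 1" by (rule real_of_int_floor_add_one_gt)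
      have d1: "dist x (real k) < 2/3" unfolding dist_real_def kk using f1 f2 by linarith
      have "\<lfloor>x + 1/2\<rfloor> < int N + 1" unfolding floor_less_iff using x by simp
      then have d2: "k \<le> N" unfolding k_def by (simp add: nat_le_iff)
      have "{\<rho> \<in> characters A. \<phi> (\<rho> g) \<in> ball (real k) (2/3)} \<in> U"
        unfolding U_def using d2 by blast
      moreover have "\<rho> \<in> {\<rho> \<in> characters A. \<phi> (\<rho> g) \<in> ball (real k) (2/3)}"
        using r topT d1 by (simp add: x_def dist_commute)
      ultimately show "\<rho> \<in> \<Union>U" by blast
    qed
  qed
  have Ufin: "finite U" unfolding U_def by simp
  have Uin: "U \<in> open_covers T" unfolding open_covers_def using Uopen Ucov by blast
  define blk where "blk = (\<lambda>n m. map (\<lambda>i. L (m+i)) [0..<n])"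
  have key: "card (range (blk n)) \<le> cover_num T (join_cover T G U n)" for n
  proof -
    define J where "J = join_cover T G U n"
    have "J \<subseteq> (\<lambda>W. topspace T \<inter> (\<Inter>i<n. (G ^^ i) -` W i)) ` (PiE {..<n} (\<lambda>_. U))"
    proof
      fix x assume "x \<in> J"
      then obtain W where x: "x = topspace T \<inter> (\<Inter>i<n. (G ^^ i) -` W i)" and W: "\<forall>i<n. W i \<in> U"
        unfolding J_def join_cover_def by blast
      have "x = topspace T \<inter> (\<Inter>i<n. (G ^^ i) -` (restrict W {..<n}) i)"
        unfolding x by auto
      moreover have "restrict W {..<n} \<in> PiE {..<n} (\<lambda>_. U)" using W by auto
      ultimately show "x \<in> (\<lambda>W. topspace T \<inter> (\<Inter>i<n. (G ^^ i) -` W i)) ` (PiE {..<n} (\<lambda>_. U))"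
        by blast
    qed
    then have Jfin: "finite J" by (rule finite_subset) (simp add: Ufin finite_PiE)
    have Jcov: "\<Union>J = topspace T"
    proof
      show "\<Union>J \<subseteq> topspace T" unfolding J_def join_cover_def by auto
      show "topspace T \<subseteq> \<Union>J"
      proof
        fix \<rho> assume r: "\<rho> \<in> topspace T"
        have "\<forall>i. \<exists>S\<in>U. (G ^^ i) \<rho> \<in> S"
        proof
          fix i
          have "(G ^^ i) \<rho> \<in> topspace T" using r map_iter_char[of \<rho> "{g}" i]
            unfolding topT G_def A_def by simp
          then show "\<exists>S\<in>U. (G ^^ i) \<rho> \<in> S" using Ucov by blast
        qed
        then obtain W where W: "\<And>i. W i \<in> U \<and> (G ^^ i) \<rho> \<in> W i" by metis
        have "topspace T \<inter> (\<Inter>i<n. (G ^^ i) -` W i) \<in> J"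
          unfolding J_def join_cover_def using W by blast
        moreover have "\<rho> \<in> topspace T \<inter> (\<Inter>i<n. (G ^^ i) -` W i)" using r W by auto
        ultimately show "\<rho> \<in> \<Union>J" by blast
      qed
    qed
    have sep: "blk n m = blk n m'" if S: "S \<in> J" "ev A m \<in> S" "ev A m' \<in> S" for S m m'
    proof -
      obtain W where x: "S = topspace T \<inter> (\<Inter>i<n. (G ^^ i) -` W i)" and W: "\<forall>i<n. W i \<in> U"
        using S(1) unfolding J_def join_cover_def by blast
      have "L (m+i) = L (m'+i)" if i: "i < n" for i
      proof -
        obtain k where Wi: "W i = {\<rho> \<in> characters A. \<phi> (\<rho> g) \<in> ball (real k) (2/3)}"
          using W i unfolding U_def by blast
        have "(G ^^ i) (ev A m) \<in> W i" "(G ^^ i) (ev A m') \<in> W i"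
          using S(2,3) i unfolding x by auto
        then have "ev A (m+i) \<in> W i" "ev A (m'+i) \<in> W i"
          using map_iter_ev[of i "{g}"] unfolding G_def A_def by simp_all
        then have "dist (real (L (m+i))) (real k) < 2/3" "dist (real (L (m'+i))) (real k) < 2/3"
          unfolding Wi using gA val by (auto simp: ev_def dist_commute)
        then show ?thesis by (rule int_close)
      qed
      then show ?thesis unfolding blk_def by simp
    qed
    have "card (range (blk n)) \<le> card V" if V: "V \<subseteq> J" "finite V" "\<Union>V = topspace T" for V
    proof -
      define pm where "pm = (\<lambda>b. SOME m. blk n m = b)"
      define pick where "pick = (\<lambda>b. SOME S. S \<in> V \<and> ev A (pm b) \<in> S)"
      have pmb: "blk n (pm b) = b" if "b \<in> range (blk n)" for b
        unfolding pm_def using that by (metis (mono_tags) imageE someI)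
      have pk: "pick b \<in> V \<and> ev A (pm b) \<in> pick b" for b
      proof -
        have "ev A (pm b) \<in> topspace T" unfolding topT A_def by (rule ev_char)
        then have "\<exists>S. S \<in> V \<and> ev A (pm b) \<in> S" using V(3) by blast
        then show ?thesis unfolding pick_def by (rule someI_ex)
      qed
      have "inj_on pick (range (blk n))"
      proof (rule inj_onI)
        fix b b' assume b: "b \<in> range (blk n)" "b' \<in> range (blk n)" and e: "pick b = pick b'"
        have "blk n (pm b) = blk n (pm b')"
          using sep[of "pick b" "pm b" "pm b'"] pk[of b] pk[of b'] e V(1) by auto
        then show "b = b'" using pmb b by simp
      qed
      moreover have "pick ` range (blk n) \<subseteq> V" using pk by blast
      ultimately show ?thesis using card_inj_on_le V(2) by blast
    qed
    then show ?thesis unfolding cover_num_def J_def[symmetric]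
      by (intro cInf_greatest) (use Jfin Jcov in auto)
  qed
  have Bcard: "K ^ n \<le> card (range (blk n))" for n
  proof -
    define Ws where "Ws = {xs. set xs \<subseteq> {..<K} \<and> length xs = n}"
    have "card Ws = K ^ n" unfolding Ws_def by (simp add: card_lists_length_eq)
    moreover have "map Suc ` Ws \<subseteq> range (blk n)"
    proof
      fix y assume "y \<in> map Suc ` Ws"
      then obtain w where y: "y = map Suc w" and w: "set w \<subseteq> {..<K}" "length w = n"
        unfolding Ws_def by blast
      obtain m where m: "\<forall>i<length w. L (m+i) = Suc (w!i)" using words[OF w(1)] by blast
      have "blk n m = y" unfolding blk_def y using m w(2)
        by (intro nth_equalityI) auto
      then show "y \<in> range (blk n)" by blast
    qed
    moreover have "finite (range (blk n))"
    proof (rule finite_subset)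
      show "range (blk n) \<subseteq> {xs. set xs \<subseteq> L ` UNIV \<and> length xs = n}"
        unfolding blk_def by auto
      have "L ` UNIV \<subseteq> {..N}"
      proof
        fix y assume "y \<in> range L"
        then obtain n where "y = L n" by blast
        then show "y \<in> {..N}" using rng[of "g n"] val[of n] by simp
      qed
      then show "finite {xs. set xs \<subseteq> L ` UNIV \<and> length xs = n}"
        by (intro finite_lists_length_eq finite_subset[OF _ finite_atMost])
    qed
    moreover have "inj (map Suc)" by (simp add: inj_on_def)
    ultimately have "card (map Suc ` Ws) = K ^ n" "card (map Suc ` Ws) \<le> card (range (blk n))"
      using card_image[of "map Suc" Ws] inj_on_subset[of "map Suc" UNIV Ws] card_mono[of "range (blk n)" "map Suc ` Ws"]
      by auto
    then show ?thesis by simp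
  qed
  have CE: "ereal (ln K) \<le> cover_entropy T G U"
    unfolding cover_entropy_def
  proof (rule le_Limsup)
    show "sequentially \<noteq> bot" by simp
    show "\<forall>\<^sub>F n in sequentially. ereal (ln (real K)) \<le> ereal (ln (real (cover_num T (join_cover T G U n))) / real n)"
      using eventually_ge_at_top[of 1]
    proof eventually_elim
      case (elim n)
      define c where "c = cover_num T (join_cover T G U n)"
      have "K ^ n \<le> c" using key[of n] Bcard[of n] unfolding c_def by linarith
      then have "real K ^ n \<le> real c" by (metis of_nat_le_iff of_nat_power)
      moreover have "0 < real K ^ n" using K by simp
      ultimately have "ln (real K ^ n) \<le> ln (real c)" using ln_le_cancel_iff
        by (metis less_le_trans ln_mono)
      then have "real n * ln (real K) \<le> ln (real c)" using K by (simp add: ln_realpow)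
      then have "ln (real K) \<le> ln (real c) / real n" using elim by (simp add: field_simps)
      then show ?case unfolding c_def by simp
    qed
  qed
  also have "\<dots> \<le> top_entropy T G" unfolding top_entropy_def using Uin by (rule SUP_upper)
  finally show ?thesis unfolding AE_fun_def AE_alg_def T_def G_def A_def .
qed

primrec Pl :: "nat \<Rightarrow> nat list" where
  "Pl 0 = []"
| "Pl (Suc m) = Pl m @ from_nat m @ [0]"

definition useq :: "nat \<Rightarrow> nat" where
  "useq n = Pl (Suc n) ! n"

lemma Pl_len: "m \<le> length (Pl m)"
  by (induction m) auto

lemma Pl_prefix: "\<exists>ys. Pl (m + k) = Pl m @ ys"
  by (induction k) auto

lemma useq_Pl:
  assumes "n < length (Pl m)"
  shows "useq n = Pl m ! n"
proof -
  define M where "M = max (Suc n) m"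
  obtain ys1 where y1: "Pl M = Pl (Suc n) @ ys1"
    using Pl_prefix[of "Suc n" "M - Suc n"] unfolding M_def by auto
  obtain ys2 where y2: "Pl M = Pl m @ ys2"
    using Pl_prefix[of m "M - m"] unfolding M_def by auto
  have "n < length (Pl (Suc n))" using Pl_len[of "Suc n"] by simp
  then have "Pl M ! n = Pl (Suc n) ! n" unfolding y1 by (simp add: nth_append)
  moreover have "Pl M ! n = Pl m ! n" using assms unfolding y2 by (simp add: nth_append)
  ultimately show ?thesis unfolding useq_def by simp
qed

lemma useq_universal: "\<exists>m. \<forall>i<length w. useq (m+i) = w!i"
proof -
  define mm where "mm = to_nat w"
  have P: "Pl (Suc mm) = Pl mm @ w @ [0]" unfolding mm_def by simp
  show ?thesis
  proof (intro exI allI impI)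
    fix i assume i: "i < length w"
    have "length (Pl mm) + i < length (Pl (Suc mm))" unfolding P using i by simp
    then have "useq (length (Pl mm) + i) = Pl (Suc mm) ! (length (Pl mm) + i)" by (rule useq_Pl)
    also have "\<dots> = w ! i" unfolding P using i by (simp add: nth_append)
    finally show "useq (length (Pl mm) + i) = w ! i" .
  qed
qed

lemma cos_shift_int: "cos (2 * pi * of_int a + t) = cos t"
  by (simp add: cos_add cos_int_2pin sin_int_2pin)

lemma approx_exists:
  fixes f :: "nat \<Rightarrow> complex"
  assumes f: "f \<in> linf" and e: "e > 0"
  shows "\<exists>g\<in>E_infty. linf_norm (\<lambda>n. f n - g n) < e"
proof -
  define \<delta> where "\<delta> = e / 2"
  have dpos: "\<delta> > 0" unfolding \<delta>_def using e by simp
  define v where "v = (\<lambda>j::nat. 1 - 1 / (real j + 1))"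
  define s where "s = (\<lambda>n. \<delta> / (2 * pi) * arccos (v (useq n)))"
  define a where "a = (\<lambda>n. round (Re (f n) / \<delta>))"
  define g where "g = (\<lambda>n. Complex (\<delta> * of_int (a n) + s n) (Im (f n)))"
  have v01: "0 \<le> v j" "v j \<le> 1" for j unfolding v_def by (auto simp: field_simps)
  have s_bd: "0 \<le> s n" "s n \<le> \<delta> / 2" for n
  proof -
    have "0 \<le> arccos (v (useq n))" "arccos (v (useq n)) \<le> pi"
      using v01[of "useq n"] arccos_lbound[of "v (useq n)"] arccos_ubound[of "v (useq n)"] by auto
    then show "0 \<le> s n" "s n \<le> \<delta> / 2" unfolding s_def using dpos
      by (auto simp: field_simps)
  qed
  have diff: "cmod (f n - g n) \<le> \<delta>" for n
  proof -
    have "f n - g n = Complex (Re (f n) - (\<delta> * of_int (a n) + s n)) 0"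
      unfolding g_def by (simp add: complex_eq_iff)
    then have c: "cmod (f n - g n) = \<bar>Re (f n) - (\<delta> * of_int (a n) + s n)\<bar>"
      by (simp add: cmod_def)
    have r: "\<bar>of_int (a n) - Re (f n) / \<delta>\<bar> \<le> 1/2" unfolding a_def by (rule of_int_round_abs_le)
    have "\<bar>\<delta> * of_int (a n) - Re (f n)\<bar> = \<delta> * \<bar>of_int (a n) - Re (f n) / \<delta>\<bar>"
      using dpos by (simp add: field_simps abs_mult[symmetric])
    also have "\<dots> \<le> \<delta> / 2" using r dpos by (simp add: mult_left_mono[of _ "1/2" \<delta>, simplified])
    finally have "\<bar>\<delta> * of_int (a n) - Re (f n)\<bar> \<le> \<delta> / 2" .
    then show ?thesis unfolding c using s_bd[of n] by linarith
  qed
  have gl: "g \<in> linf"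
  proof -
    obtain B where B: "\<And>n. cmod (f n) \<le> B" using f unfolding linf_def bounded_iff by auto
    have "cmod (g n) \<le> B + \<delta>" for n
      using norm_triangle_ineq4[of "f n" "f n - g n"] B[of n] diff[of n] by (simp add: norm_minus_commute)
    then show ?thesis unfolding linf_def bounded_iff by auto
  qed
  have AEinf: "AE_fun g = \<infinity>"
  proof -
    have lowK: "ereal (ln (real K)) \<le> AE_fun g" if K: "K \<ge> 1" for K :: nat
    proof (rule entropy_lower[where \<phi> = "\<lambda>z. 1 / max (1 - cos (2 * pi * Re z / \<delta>)) (1 / (real K + 1))"
          and L = "\<lambda>n. min (useq n) K + 1" and N = "K + 1"])
      have mp: "0 < max (1 - cos (2 * pi * Re z / \<delta>)) (1 / (real K + 1))" for z
        by (simp add: less_max_iff_disj)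
      show "continuous_on UNIV (\<lambda>z. 1 / max (1 - cos (2 * pi * Re z / \<delta>)) (1 / (real K + 1)))"
        using mp dpos by (intro continuous_intros) (auto simp: less_le)
      show "0 \<le> 1 / max (1 - cos (2 * pi * Re z / \<delta>)) (1 / (real K + 1)) \<and>
            1 / max (1 - cos (2 * pi * Re z / \<delta>)) (1 / (real K + 1)) \<le> real (K + 1)" for z
      proof -
        have "1 / (real K + 1) \<le> max (1 - cos (2 * pi * Re z / \<delta>)) (1 / (real K + 1))" by simp
        then have "1 / max (1 - cos (2 * pi * Re z / \<delta>)) (1 / (real K + 1)) \<le> 1 / (1 / (real K + 1))"
          using mp[of z] by (intro divide_left_mono) auto
        then show ?thesis using mp[of z] by simp
      qed
      show "1 / max (1 - cos (2 * pi * Re (g n) / \<delta>)) (1 / (real K + 1)) = real (min (useq n) K + 1)" for n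
      proof -
        have "2 * pi * Re (g n) / \<delta> = 2 * pi * of_int (a n) + arccos (v (useq n))"
          unfolding g_def s_def using dpos by (simp add: field_simps)
        then have "cos (2 * pi * Re (g n) / \<delta>) = v (useq n)"
          using v01[of "useq n"] cos_arccos[of "v (useq n)"] by (simp add: cos_shift_int)
        then have c: "1 - cos (2 * pi * Re (g n) / \<delta>) = 1 / (real (useq n) + 1)"
          unfolding v_def by simp
        show ?thesis
        proof (cases "useq n \<le> K")
          case True
          then have "1 / (real K + 1) \<le> 1 / (real (useq n) + 1)" by (simp add: frac_le)
          then show ?thesis unfolding c using True by (simp add: max_def)
        next
          case False
          then have "1 / (real (useq n) + 1) \<le> 1 / (real K + 1)" by (simp add: frac_le)
          then show ?thesis unfolding c using False by (simp add: max_def)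
        qed
      qed
      show "K \<ge> 1" by (rule K)
      show "\<exists>m. \<forall>i<length w. min (useq (m + i)) K + 1 = Suc (w ! i)" if w: "set w \<subseteq> {..<K}" for w
      proof -
        obtain m where m: "\<forall>i<length w. useq (m+i) = w!i" using useq_universal by blast
        have "\<forall>i<length w. min (useq (m + i)) K + 1 = Suc (w ! i)"
        proof (intro allI impI)
          fix i assume i: "i < length w"
          then have "w ! i < K" using w nth_mem by fastforce
          then show "min (useq (m + i)) K + 1 = Suc (w ! i)" using m i by simp
        qed
        then show ?thesis by blast
      qed
    qed
    show ?thesis
    proof (cases "AE_fun g")
      case (real r)
      define K where "K = nat \<lceil>exp (r + 1)\<rceil>"
      have "exp (r + 1) \<le> real K" unfolding K_def by linarith
      moreover have "0 < exp (r+1)" by simp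
      ultimately have "0 < real K" by linarith
      then have K1a: "K \<ge> 1" by simp
      have "ln (exp (r+1)) \<le> ln (real K)"
        using \<open>exp (r + 1) \<le> real K\<close> \<open>0 < exp (r+1)\<close> by (rule ln_mono)
      then have K1: "K \<ge> 1" "r + 1 \<le> ln (real K)" using K1a by simp_all
      have "ereal (r + 1) \<le> ereal r" using lowK[OF K1(1)] K1(2) real
        by (metis ereal_less_eq(3) order_trans)
      then show ?thesis by simp
    next
      case PInf then show ?thesis by simp
    next
      case MInf
      then show ?thesis using lowK[of 1] by simp
    qed
  qed
  have "linf_norm (\<lambda>n. f n - g n) \<le> \<delta>"
    unfolding linf_norm_def by (rule cSUP_least) (use diff in auto)
  then have "linf_norm (\<lambda>n. f n - g n) < e" unfolding \<delta>_def using e by simp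
  moreover have "g \<in> E_infty" unfolding E_infty_def using gl AEinf by simp
  ultimately show ?thesis by blast
qed

theorem theorem1p3:
  shows "\<forall>f\<in>linf. \<forall>e>0. \<exists>g\<in>E_infty. linf_norm (\<lambda>n. f n - g n) < e"
  using approx_exists by blast

end
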